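(* Let $\mathbb F$ be an algebraically closed field, and let $p_1,\dots,p_m\in\mathbb F[x]$ be polynomials such that $\{1,p_1,\dots,p_m\}$ is linearly independent over $\mathbb F$. Then the polynomial map $L:\mathbb F\to\mathbb F^m$, $x\mapsto(p_1(x),\dots,p_m(x))$, is $(m-1,1)$-elusive. In particular the moment curve $x\mapsto(x,x^2,\dots,x^m)$ is $(m-1,1)$-elusive.
   Context: A polynomial map $M=(M_1,\dots,M_m)$ has degree $d$ if each $M_i$ has degree at most $d$. $L:\mathbb F^n\to\mathbb F^m$ is $(r,d)$-elusive if for every polynomial map $M:\mathbb F^r\to\mathbb F^m$ of degree $d$, $\mathrm{im}(L)\not\subseteq\mathrm{im}(M)$. *)

theory Defs
  imports "HOL-Computational_Algebra.Polynomial"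
begin

text \<open>Points of F^r are lists of length r.\<close>

definition mpoly_fun_deg :: "nat \<Rightarrow> nat \<Rightarrow> ('a::comm_ring_1 list \<Rightarrow> 'a) \<Rightarrow> bool" where
  "mpoly_fun_deg r d f \<longleftrightarrow>
     (\<exists>c :: nat list \<Rightarrow> 'a. \<forall>xs. length xs = r \<longrightarrow>
        f xs = (\<Sum>\<alpha>\<in>{\<alpha>. length \<alpha> = r \<and> sum_list \<alpha> \<le> d}. c \<alpha> * (\<Prod>i<r. (xs ! i) ^ (\<alpha> ! i))))"

definition poly_map :: "nat \<Rightarrow> nat \<Rightarrow> nat \<Rightarrow> ('a::comm_ring_1 list \<Rightarrow> 'a list) \<Rightarrow> bool" where
  "poly_map r m d M \<longleftrightarrow>
     (\<exists>fs. length fs = m \<and> (\<forall>f\<in>set fs. mpoly_fun_deg r d f) \<and>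
           (\<forall>ys. length ys = r \<longrightarrow> M ys = map (\<lambda>f. f ys) fs))"

definition elusive :: "nat \<Rightarrow> nat \<Rightarrow> nat \<Rightarrow> nat \<Rightarrow> ('a::comm_ring_1 list \<Rightarrow> 'a list) \<Rightarrow> bool" where
  "elusive n m r d L \<longleftrightarrow>
     (\<forall>M. poly_map r m d M \<longrightarrow>
        \<not> (L ` {xs. length xs = n} \<subseteq> M ` {ys. length ys = r}))"

text \<open>The map F -> F^m, x |-> (p_1(x),...,p_m(x)), viewed on F^1.\<close>

definition poly_curve :: "'a::comm_ring_1 poly list \<Rightarrow> 'a list \<Rightarrow> 'a list" where
  "poly_curve ps xs = map (\<lambda>p. poly p (hd xs)) ps"

end

theory Submission
  imports Defs "Jordan_Normal_Form.Determinant"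
begin

hide_const (open) Module.module.smult

definition ev :: "nat \<Rightarrow> nat \<Rightarrow> nat list" where
  "ev r j = (replicate r 0)[j := 1]"

lemma S_finite: "finite {\<alpha>::nat list. length \<alpha> = r \<and> sum_list \<alpha> \<le> d}"
proof -
  have "{\<alpha>::nat list. length \<alpha> = r \<and> sum_list \<alpha> \<le> d} \<subseteq> {xs. set xs \<subseteq> {0..d} \<and> length xs = r}"
    using elem_le_sum_list by (force simp: in_set_conv_nth)
  moreover have "finite {xs. set xs \<subseteq> {0..d} \<and> length xs = r}"
    by (rule finite_lists_length_eq) simp
  ultimately show ?thesis by (rule finite_subset)
qed

lemma S_shape:
  assumes "length \<alpha> = r" "sum_list \<alpha> \<le> 1" "\<alpha> \<noteq> replicate r 0"
  shows "\<exists>j<r. \<alpha> = ev r j"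
proof -
  obtain j where j: "j < r" "\<alpha> ! j \<noteq> 0"
    using assms by (metis nth_equalityI length_replicate nth_replicate)
  have sum: "sum_list \<alpha> = (\<Sum>i<r. \<alpha> ! i)"
    using assms(1) by (simp add: sum_list_sum_nth atLeast0LessThan)
  have "\<alpha> ! j \<le> sum_list \<alpha>" unfolding sum
    by (rule member_le_sum) (use j in auto)
  hence aj: "\<alpha> ! j = 1" using j assms(2) by linarith
  have others: "\<alpha> ! i = 0" if "i < r" "i \<noteq> j" for i
  proof -
    have "(\<Sum>i\<in>{i,j}. \<alpha> ! i) \<le> (\<Sum>i<r. \<alpha> ! i)"
      by (rule sum_mono2) (use that j in auto)
    thus ?thesis using that aj assms(2) sum by simp
  qed
  have "\<alpha> = ev r j"
    by (rule nth_equalityI) (use assms(1) j aj others in \<open>auto simp: ev_def nth_list_update\<close>)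
  thus ?thesis using j by blast
qed

lemma lin_dep:
  fixes g :: "nat \<Rightarrow> nat \<Rightarrow> 'a::field"
  assumes "m \<ge> 1"
  shows "\<exists>v. (\<exists>k<m. v k \<noteq> 0) \<and> (\<forall>j<m-1. (\<Sum>k<m. g j k * v k) = 0)"
proof -
  define B where "B = mat\<^sub>r m m (\<lambda>i. if i = m - 1 then 0\<^sub>v m else vec m (g i))"
  have "det B = 0" unfolding B_def
    by (rule det_row_0) (use assms in auto)
  moreover have Bc: "B \<in> carrier_mat m m" by (simp add: B_def)
  ultimately obtain w where w: "w \<in> carrier_vec m" "w \<noteq> 0\<^sub>v m" "B *\<^sub>v w = 0\<^sub>v m"
    using det_0_iff_vec_prod_zero_field by blast
  define v where "v k = w $ k" for k
  have "\<exists>k<m. v k \<noteq> 0"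
  proof (rule ccontr)
    assume "\<not> ?thesis"
    hence "w = 0\<^sub>v m" using w(1) by (intro eq_vecI) (auto simp: v_def)
    thus False using w(2) by simp
  qed
  moreover have "(\<Sum>k<m. g j k * v k) = 0" if "j < m - 1" for j
  proof -
    have "(B *\<^sub>v w) $ j = 0" using w(3) that by simp
    moreover have "(B *\<^sub>v w) $ j = (\<Sum>k<m. g j k * v k)"
      using that w(1) by (simp add: B_def mult_mat_vec_def scalar_prod_def v_def atLeast0LessThan)
    ultimately show ?thesis by simp
  qed
  ultimately show ?thesis by blast
qed

lemma annihilator:
  fixes fs :: "('a::field list \<Rightarrow> 'a) list"
  assumes "m \<ge> 1" "length fs = m" "\<forall>f\<in>set fs. mpoly_fun_deg (m - 1) 1 f"
  shows "\<exists>v C. (\<exists>k<m. v k \<noteq> 0) \<and>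
     (\<forall>ys. length ys = m - 1 \<longrightarrow> (\<Sum>k<m. v k * (fs ! k) ys) = C)"
proof -
  let ?r = "m - 1"
  let ?S = "{\<alpha>::nat list. length \<alpha> = ?r \<and> sum_list \<alpha> \<le> 1}"
  have "\<forall>k<m. \<exists>c :: nat list \<Rightarrow> 'a. \<forall>xs. length xs = ?r \<longrightarrow>
        (fs ! k) xs = (\<Sum>\<alpha>\<in>?S. c \<alpha> * (\<Prod>i<?r. (xs ! i) ^ (\<alpha> ! i)))"
  proof (intro allI impI)
    fix k assume "k < m"
    hence "fs ! k \<in> set fs" using assms(2) by simp
    thus "\<exists>c :: nat list \<Rightarrow> 'a. \<forall>xs. length xs = ?r \<longrightarrow>
        (fs ! k) xs = (\<Sum>\<alpha>\<in>?S. c \<alpha> * (\<Prod>i<?r. (xs ! i) ^ (\<alpha> ! i)))"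
      using assms(3) unfolding mpoly_fun_deg_def by blast
  qed
  then obtain c where c0: "\<forall>k<m. \<forall>xs. length xs = ?r \<longrightarrow>
        (fs ! k) xs = (\<Sum>\<alpha>\<in>?S. c k \<alpha> * (\<Prod>i<?r. (xs ! i) ^ (\<alpha> ! i)))"
    unfolding choice_iff' by blast
  hence c: "\<And>k xs. k < m \<Longrightarrow> length xs = ?r \<Longrightarrow>
        (fs ! k) xs = (\<Sum>\<alpha>\<in>?S. c k \<alpha> * (\<Prod>i<?r. (xs ! i) ^ (\<alpha> ! i)))"
    by blast
  obtain v where v: "\<exists>k<m. v k \<noteq> 0" "\<And>j. j < ?r \<Longrightarrow> (\<Sum>k<m. c k (ev ?r j) * v k) = 0"
    using lin_dep[OF assms(1), of "\<lambda>j k. c k (ev ?r j)"] by blast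
  define z where "z = replicate ?r (0::nat)"
  have zS: "z \<in> ?S" by (simp add: z_def sum_list_replicate)
  have "(\<Sum>k<m. v k * (fs ! k) ys) = (\<Sum>k<m. v k * c k z)" if ys: "length ys = ?r" for ys
  proof -
    have "(\<Sum>k<m. v k * (fs ! k) ys) =
       (\<Sum>k<m. \<Sum>\<alpha>\<in>?S. v k * c k \<alpha> * (\<Prod>i<?r. (ys ! i) ^ (\<alpha> ! i)))"
    proof (rule sum.cong[OF refl])
      fix k assume "k \<in> {..<m}"
      hence "(fs ! k) ys = (\<Sum>\<alpha>\<in>?S. c k \<alpha> * (\<Prod>i<?r. (ys ! i) ^ (\<alpha> ! i)))"
        using c ys by simp
      thus "v k * (fs ! k) ys = (\<Sum>\<alpha>\<in>?S. v k * c k \<alpha> * (\<Prod>i<?r. (ys ! i) ^ (\<alpha> ! i)))"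
        by (simp only: sum_distrib_left mult.assoc)
    qed
    also have "\<dots> = (\<Sum>\<alpha>\<in>?S. \<Sum>k<m. v k * c k \<alpha> * (\<Prod>i<?r. (ys ! i) ^ (\<alpha> ! i)))"
      by (rule sum.swap)
    also have "\<dots> = (\<Sum>\<alpha>\<in>?S. if \<alpha> = z then (\<Sum>k<m. v k * c k z) else 0)"
    proof (rule sum.cong[OF refl])
      fix \<alpha> assume a: "\<alpha> \<in> ?S"
      show "(\<Sum>k<m. v k * c k \<alpha> * (\<Prod>i<?r. (ys ! i) ^ (\<alpha> ! i))) =
            (if \<alpha> = z then (\<Sum>k<m. v k * c k z) else 0)"
      proof (cases "\<alpha> = z")
        case True
        have "(\<Prod>i<?r. (ys ! i) ^ (\<alpha> ! i)) = 1"
          by (rule prod.neutral) (simp add: True z_def)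
        thus ?thesis using True by simp
      next
        case False
        then obtain j where j: "j < ?r" "\<alpha> = ev ?r j"
          using S_shape[of \<alpha> ?r] a by (auto simp: z_def)
        have "(\<Sum>k<m. v k * c k \<alpha> * (\<Prod>i<?r. (ys ! i) ^ (\<alpha> ! i))) =
              (\<Sum>k<m. c k (ev ?r j) * v k) * (\<Prod>i<?r. (ys ! i) ^ (\<alpha> ! i))"
          unfolding sum_distrib_right j(2)[symmetric] by (simp only: mult.commute)
        thus ?thesis using v(2)[OF j(1)] False by simp
      qed
    qed
    also have "\<dots> = (\<Sum>k<m. v k * c k z)"
      using zS S_finite[of ?r 1] by (simp add: sum.delta)
    finally show ?thesis .
  qed
  thus ?thesis using v(1) by blast
qed

lemma all_zero_poly:
  fixes Q :: "'a::alg_closed_field poly"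
  assumes "\<And>x. poly Q x = 0"
  shows "Q = 0"
proof (rule ccontr)
  assume Q: "Q \<noteq> 0"
  show False
  proof (cases "degree Q = 0")
    case True
    then obtain a where "Q = [:a:]" by (metis degree_eq_zeroE)
    thus False using Q assms[of 0] by simp
  next
    case False
    have "degree (Q + [:1:]) > 0" using False by (simp add: degree_add_eq_left)
    then obtain x where "poly (Q + [:1:]) x = 0" using alg_closed_imp_poly_has_root by blast
    thus False using assms[of x] by simp
  qed
qed

lemma elusive_general:
  fixes ps :: "'a::alg_closed_field poly list" and m :: nat
  assumes m: "m \<ge> 1"
    and len: "length ps = m"
    and ind: "\<forall>c0 (cs :: 'a list). length cs = m \<longrightarrow>
           [:c0:] + (\<Sum>i<m. smult (cs ! i) (ps ! i)) = 0 \<longrightarrow>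
           c0 = 0 \<and> (\<forall>i<m. cs ! i = 0)"
  shows "elusive 1 m (m - 1) 1 (poly_curve ps)"
  unfolding elusive_def
proof (intro allI impI notI)
  fix M :: "'a list \<Rightarrow> 'a list"
  assume pm: "poly_map (m - 1) m 1 M"
    and sub: "poly_curve ps ` {xs. length xs = 1} \<subseteq> M ` {ys. length ys = m - 1}"
  obtain fs where fs: "length fs = m" "\<forall>f\<in>set fs. mpoly_fun_deg (m - 1) 1 f"
    "\<And>ys. length ys = m - 1 \<Longrightarrow> M ys = map (\<lambda>f. f ys) fs"
    using pm unfolding poly_map_def by blast
  obtain v C where v: "\<exists>k<m. v k \<noteq> 0"
    "\<And>ys. length ys = m - 1 \<Longrightarrow> (\<Sum>k<m. v k * (fs ! k) ys) = C"
    using annihilator[OF m fs(1,2)] by blast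
  define cs where "cs = map v [0..<m]"
  define Q where "Q = [:-C:] + (\<Sum>i<m. smult (cs ! i) (ps ! i))"
  have "poly Q x = 0" for x
  proof -
    have "poly_curve ps [x] \<in> M ` {ys. length ys = m - 1}" using sub by auto
    then obtain ys where ys: "length ys = m - 1" "poly_curve ps [x] = M ys" by auto
    have "poly (ps ! k) x = (fs ! k) ys" if "k < m" for k
    proof -
      have "poly_curve ps [x] ! k = M ys ! k" using ys by simp
      thus ?thesis using that len fs(1) fs(3)[OF ys(1)] by (simp add: poly_curve_def)
    qed
    hence "(\<Sum>k<m. v k * poly (ps ! k) x) = C" using v(2)[OF ys(1)] by simp
    thus ?thesis by (simp add: Q_def poly_sum cs_def)
  qed
  hence "Q = 0" by (rule all_zero_poly)
  hence "\<forall>i<m. cs ! i = 0" using ind unfolding Q_def by (metis cs_def length_map length_upt minus_nat.diff_0)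
  thus False using v(1) by (auto simp: cs_def)
qed

lemma monomials_indep:
  fixes m :: nat
  shows "\<forall>c0 (cs :: 'a::field list). length cs = m \<longrightarrow>
           [:c0:] + (\<Sum>i<m. smult (cs ! i) (map (\<lambda>i. monom (1::'a) (Suc i)) [0..<m] ! i)) = 0 \<longrightarrow>
           c0 = 0 \<and> (\<forall>i<m. cs ! i = 0)"
proof (intro allI impI)
  fix c0 :: 'a and cs :: "'a list"
  assume "length cs = m" and
    h: "[:c0:] + (\<Sum>i<m. smult (cs ! i) (map (\<lambda>i. monom (1::'a) (Suc i)) [0..<m] ! i)) = 0"
  have e: "(\<Sum>i<m. smult (cs ! i) (map (\<lambda>i. monom (1::'a) (Suc i)) [0..<m] ! i)) =
        (\<Sum>i<m. monom (cs ! i) (Suc i))"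
    by (rule sum.cong) (auto simp: smult_monom)
  have h': "[:c0:] + (\<Sum>i<m. monom (cs ! i) (Suc i)) = 0" using h e by simp
  have "coeff ([:c0:] + (\<Sum>i<m. monom (cs ! i) (Suc i))) 0 = 0" using h' by simp
  hence "c0 = 0" by (simp add: coeff_sum)
  moreover have "cs ! j = 0" if "j < m" for j
  proof -
    have "coeff ([:c0:] + (\<Sum>i<m. monom (cs ! i) (Suc i))) (Suc j) = 0" using h' by simp
    hence "(\<Sum>i<m. if i = j then cs ! i else 0) = 0"
      by (simp add: coeff_sum coeff_monom)
    thus ?thesis using that by (simp add: sum.delta)
  qed
  ultimately show "c0 = 0 \<and> (\<forall>i<m. cs ! i = 0)" by blast
qed

theorem proposition9p5:
  fixes ps :: "'a::alg_closed_field poly list" and m :: nat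
  assumes "m \<ge> 1"
    and "length ps = m"
    and "\<forall>c0 (cs :: 'a list). length cs = m \<longrightarrow>
           [:c0:] + (\<Sum>i<m. smult (cs ! i) (ps ! i)) = 0 \<longrightarrow>
           c0 = 0 \<and> (\<forall>i<m. cs ! i = 0)"
  shows "elusive 1 m (m - 1) 1 (poly_curve ps) \<and>
         elusive 1 m (m - 1) 1
           (poly_curve (map (\<lambda>i. monom (1::'a) (Suc i)) [0..<m]))"
  using elusive_general[OF assms] elusive_general[OF assms(1) _ monomials_indep] by simp

end
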